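(* For every $\varepsilon\in(0,1/2)$ there exist $\delta=\delta_\varepsilon>0$ and an integer $N_{\varepsilon,\delta}$ such that for every integer $N\ge N_{\varepsilon,\delta}$ there is a set $\mathcal E(N)\subset\{0,1\}^N$ with $\#\mathcal E(N)\le \varepsilon\, 2^N$ such that for every $\mathfrak u\in\{0,1\}^N\setminus\mathcal E(N)$ and every integer $0\le k\le\lfloor\delta N\rfloor$ one has $R_{\mathfrak w}(k)\in[1/2-\varepsilon,1/2+\varepsilon]$ and $R_{\mathfrak e}(k)\in[1/2-\varepsilon,1/2+\varepsilon]$, where these proportions are computed in the P-G triangle of side $N$ generated by $\mathfrak u$.
   Context: For $\mathfrak u=(a_0,\dots,a_{N-1})\in\{0,1\}^N$, the P-G triangle of side $N$ generated by $\mathfrak u$ consists of the numbers $d_i^{(j)}\in\{0,1\}$, $j\ge0$, $0\le i\le N-1-j$, with $d_i^{(0)}=a_i$ and $d_i^{(j+1)}=|d_{i+1}^{(j)}-d_i^{(j)}|$. For $0\le k\le N-1$, the western ray $\mathfrak w_k$ is the sequence $(d_k^{(j)})_{0\le j\le N-1-k}$ and the eastern ray $\mathfrak e_k$ is the sequence $(d_{N-1-k-j}^{(j)})_{0\le j\le N-1-k}$, each of length $N-k$. $R_{\mathfrak w}(k)=\frac{1}{N-k}\#\{0\le j\le N-1-k: d_k^{(j)}=1\}$ and $R_{\mathfrak e}(k)=\frac{1}{N-k}\#\{0\le j\le N-1-k: d_{N-1-k-j}^{(j)}=1\}$ are the proportions of ones on $\mathfrak w_k$ and $\mathfrak e_k$.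 *)

theory Defs
  imports Complex_Main
begin

definition binwords :: "nat \<Rightarrow> nat list set" where
  "binwords N = {u. length u = N \<and> set u \<subseteq> {0,1}}"

text \<open>Entries of the P-G triangle generated by u: pg u j i = d_i^{(j)}
  (meaningful for j \<ge> 0, 0 \<le> i \<le> N-1-j where N = length u).\<close>
fun pg :: "nat list \<Rightarrow> nat \<Rightarrow> nat \<Rightarrow> nat" where
  "pg u 0 i = u ! i"
| "pg u (Suc j) i = (if pg u j (Suc i) \<ge> pg u j i then pg u j (Suc i) - pg u j i
                     else pg u j i - pg u j (Suc i))"

text \<open>Proportion of ones on the western ray w_k, with N = length u.\<close>
definition R_west :: "nat list \<Rightarrow> nat \<Rightarrow> real" where
  "R_west u k = (let N = length u in
     real (card {j. j \<le> N - 1 - k \<and> pg u j k = 1}) / real (N - k))"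

text \<open>Proportion of ones on the eastern ray e_k, with N = length u.\<close>
definition R_east :: "nat list \<Rightarrow> nat \<Rightarrow> real" where
  "R_east u k = (let N = length u in
     real (card {j. j \<le> N - 1 - k \<and> pg u j (N - 1 - k - j) = 1}) / real (N - k))"

end

theory Submission imports Defs begin

definition adiff :: "nat \<Rightarrow> nat \<Rightarrow> nat" where
  "adiff x y = (if y \<ge> x then y - x else x - y)"

lemma pg_Suc': "pg u (Suc j) i = adiff (pg u j i) (pg u j (Suc i))"
  by (simp add: adiff_def)

lemma adiff_comm: "adiff x y = adiff y x" by (simp add: adiff_def)

fun delta :: "nat list \<Rightarrow> nat list" where
  "delta (x#y#zs) = adiff x y # delta (y#zs)"
| "delta _ = []"

lemma length_delta[simp]: "length (delta v) = length v - 1"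
  by (induction v rule: delta.induct) auto

lemma nth_delta: "i < length v - 1 \<Longrightarrow> delta v ! i = adiff (v!i) (v!Suc i)"
  by (induction v arbitrary: i rule: delta.induct) (auto simp: nth_Cons split: nat.splits)

lemma length_funpow_delta[simp]: "length ((delta^^j) u) = length u - j"
  by (induction j) auto

lemma pg_delta: "i + j < length u \<Longrightarrow> pg u j i = (delta^^j) u ! i"
proof (induction j arbitrary: i)
  case 0 then show ?case by simp
next
  case (Suc j)
  have "pg u (Suc j) i = adiff (pg u j i) (pg u j (Suc i))" by (rule pg_Suc')
  also have "\<dots> = adiff ((delta^^j) u ! i) ((delta^^j) u ! Suc i)"
    using Suc by simp
  also have "\<dots> = (delta^^Suc j) u ! i" using Suc.prems by (simp add: nth_delta)
  finally show ?case .
qed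

definition west0 :: "nat list \<Rightarrow> nat list" where
  "west0 v = map (\<lambda>j. pg v j 0) [0..<length v]"

lemma west0_Cons: "west0 (x#xs) = x # west0 (delta (x#xs))"
proof (rule nth_equalityI)
  show "length (west0 (x#xs)) = length (x # west0 (delta (x#xs)))" by (simp add: west0_def)
  fix j assume "j < length (west0 (x#xs))"
  then have j: "j < Suc (length xs)" by (simp add: west0_def)
  show "west0 (x#xs) ! j = (x # west0 (delta (x#xs))) ! j"
  proof (cases j)
    case 0 then show ?thesis using j by (simp add: west0_def del: upt_Suc)
  next
    case (Suc j')
    have "pg (x#xs) (Suc j') 0 = (delta^^Suc j') (x#xs) ! 0"
      using j Suc by (intro pg_delta) simp
    also have "\<dots> = (delta^^j') (delta (x#xs)) ! 0" by (simp only: funpow_Suc_right comp_def)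
    also have "\<dots> = pg (delta (x#xs)) j' 0"
      using j Suc by (intro pg_delta[symmetric]) simp
    finally show ?thesis using j Suc by (simp add: west0_def del: upt_Suc)
  qed
qed

lemma west0_Nil[simp]: "west0 [] = []" by (simp add: west0_def)

lemma bin_iff: "v \<in> binwords n \<longleftrightarrow> length v = n \<and> set v \<subseteq> {0,1}"
  by (simp add: binwords_def)

lemma set_delta: "set v \<subseteq> {0,1} \<Longrightarrow> set (delta v) \<subseteq> {0,1}"
  by (induction v rule: delta.induct) (auto simp: adiff_def)

lemma west0_bin: "v \<in> binwords n \<Longrightarrow> west0 v \<in> binwords n"
proof (induction n arbitrary: v)
  case 0 then show ?case by (simp add: bin_iff)
next
  case (Suc n)
  then obtain x xs where v: "v = x#xs" by (cases v) (auto simp: bin_iff)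
  have "set v \<subseteq> {0,1}" using Suc.prems by (simp add: bin_iff)
  then have "set (delta v) \<subseteq> {0,1}" by (rule set_delta)
  then have "delta v \<in> binwords n" using Suc.prems v by (simp add: bin_iff)
  then have "west0 (delta v) \<in> binwords n" by (rule Suc.IH)
  then show ?case using Suc.prems v by (simp add: west0_Cons bin_iff)
qed

lemma delta_inj: "set (x#xs) \<subseteq> {0,1} \<Longrightarrow> set (x#ys) \<subseteq> {0,1} \<Longrightarrow> length xs = length ys \<Longrightarrow>
  delta (x#xs) = delta (x#ys) \<Longrightarrow> xs = ys"
proof (induction xs arbitrary: x ys)
  case Nil then show ?case by simp
next
  case (Cons a as)
  then obtain b bs where ys: "ys = b#bs" by (cases ys) auto
  have ab: "a = b" using Cons.prems ys by (auto simp: adiff_def)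
  show ?case using Cons.prems ys ab by (auto intro!: Cons.IH[of a bs])
qed

lemma west0_inj: "inj_on west0 (binwords n)"
proof (induction n)
  case 0 then show ?case by (simp add: bin_iff inj_on_def)
next
  case (Suc n)
  show ?case
  proof (rule inj_onI)
    fix v w assume v: "v \<in> binwords (Suc n)" and w: "w \<in> binwords (Suc n)" and e: "west0 v = west0 w"
    obtain x xs where vx: "v = x#xs" using v by (cases v) (auto simp: bin_iff)
    obtain y ys where wy: "w = y#ys" using w by (cases w) (auto simp: bin_iff)
    have xy: "x = y" and ee: "west0 (delta v) = west0 (delta w)" using e vx wy by (auto simp: west0_Cons)
    have sv: "set v \<subseteq> {0,1}" and sw: "set w \<subseteq> {0,1}" using v w by (auto simp: bin_iff)
    have "set (delta v) \<subseteq> {0,1}" using sv by (rule set_delta)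
    moreover have "set (delta w) \<subseteq> {0,1}" using sw by (rule set_delta)
    ultimately
    have "delta v \<in> binwords n" "delta w \<in> binwords n" using v w vx wy by (auto simp: bin_iff)
    then have "delta v = delta w" using Suc.IH ee by (meson inj_onD)
    then have dd: "delta (x#xs) = delta (x#ys)" using vx wy xy by simp
    have s1: "set (x#xs) \<subseteq> {0,1}" using sv vx by simp
    have s2: "set (x#ys) \<subseteq> {0,1}" using sw wy xy by simp
    have l: "length xs = length ys" using v w vx wy by (simp add: bin_iff)
    have "xs = ys" using delta_inj[OF s1 s2 l dd] .
    then show "v = w" using vx wy xy by simp
  qed
qed

lemma finite_bin: "finite (binwords n)"
proof -
  have "binwords n = {xs. set xs \<subseteq> {0::nat,1} \<and> length xs = n}" by (auto simp: bin_iff)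
  then show ?thesis using finite_lists_length_eq[of "{0::nat,1}" n] by simp
qed

lemma card_bin: "card (binwords n) = 2^n"
proof -
  have "binwords n = {xs. set xs \<subseteq> {0::nat,1} \<and> length xs = n}" by (auto simp: bin_iff)
  then show ?thesis using card_lists_length_eq[of "{0::nat,1}" n] by (simp add: numeral_2_eq_2)
qed

lemma card_pre:
  assumes "inj_on f A" "f ` A = A"
  shows "card {v\<in>A. Q (f v)} = card {v\<in>A. Q v}"
proof -
  have "f ` {v\<in>A. Q (f v)} = {v\<in>A. Q v}" using assms(2) by auto
  moreover have "inj_on f {v\<in>A. Q (f v)}" using assms(1) by (rule inj_on_subset) auto
  ultimately show ?thesis by (metis card_image)
qed

lemma west0_img: "west0 ` binwords n = binwords n"
  using endo_inj_surj[OF finite_bin _ west0_inj] west0_bin by blast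

lemma rev_img: "rev ` binwords n = binwords n"
  by (rule endo_inj_surj[OF finite_bin]) (auto simp: bin_iff)

lemma card_drop:
  "card {u\<in>binwords (a+b). Q (drop a u)} = 2^a * card {v\<in>binwords b. Q v}"
proof -
  have eq: "{u\<in>binwords (a+b). Q (drop a u)} = (\<lambda>(x,y). x@y) ` (binwords a \<times> {v\<in>binwords b. Q v})"
  proof (rule set_eqI, rule iffI)
    fix u assume u: "u \<in> {u\<in>binwords (a+b). Q (drop a u)}"
    have "take a u \<in> binwords a" using u by (auto simp: bin_iff dest: in_set_takeD)
    moreover have "drop a u \<in> binwords b" using u by (auto simp: bin_iff dest: in_set_dropD)
    ultimately have "(take a u, drop a u) \<in> binwords a \<times> {v\<in>binwords b. Q v}" using u by simp
    then show "u \<in> (\<lambda>(x,y). x@y) ` (binwords a \<times> {v\<in>binwords b. Q v})"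
      by (metis (no_types, lifting) append_take_drop_id case_prod_conv image_eqI)
  next
    fix u assume "u \<in> (\<lambda>(x,y). x@y) ` (binwords a \<times> {v\<in>binwords b. Q v})"
    then obtain x y where "u = x@y" "(x,y) \<in> binwords a \<times> {v\<in>binwords b. Q v}" by auto
    then show "u \<in> {u\<in>binwords (a+b). Q (drop a u)}" by (auto simp: bin_iff)
  qed
  have inj: "inj_on (\<lambda>(x,y). x@y) (binwords a \<times> {v\<in>binwords b. Q v})"
  proof (rule inj_onI)
    fix p q assume "p \<in> binwords a \<times> {v\<in>binwords b. Q v}" "q \<in> binwords a \<times> {v\<in>binwords b. Q v}" "(\<lambda>(x,y). x@y) p = (\<lambda>(x,y). x@y) q"
    then show "p = q" by (cases p; cases q) (simp add: bin_iff)
  qed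
  show ?thesis
    unfolding eq card_image[OF inj] card_cartesian_product card_bin by simp
qed

lemma card_take:
  "card {u\<in>binwords (a+b). Q (take a u)} = 2^b * card {v\<in>binwords a. Q v}"
proof -
  have eq: "{u\<in>binwords (a+b). Q (take a u)} = (\<lambda>(x,y). x@y) ` ({v\<in>binwords a. Q v} \<times> binwords b)"
  proof (rule set_eqI, rule iffI)
    fix u assume u: "u \<in> {u\<in>binwords (a+b). Q (take a u)}"
    have "take a u \<in> binwords a" using u by (auto simp: bin_iff dest: in_set_takeD)
    moreover have "drop a u \<in> binwords b" using u by (auto simp: bin_iff dest: in_set_dropD)
    ultimately have "(take a u, drop a u) \<in> {v\<in>binwords a. Q v} \<times> binwords b" using u by simp
    then show "u \<in> (\<lambda>(x,y). x@y) ` ({v\<in>binwords a. Q v} \<times> binwords b)"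
      by (metis (no_types, lifting) append_take_drop_id case_prod_conv image_eqI)
  next
    fix u assume "u \<in> (\<lambda>(x,y). x@y) ` ({v\<in>binwords a. Q v} \<times> binwords b)"
    then obtain x y where "u = x@y" "(x,y) \<in> {v\<in>binwords a. Q v} \<times> binwords b" by auto
    then show "u \<in> {u\<in>binwords (a+b). Q (take a u)}" by (auto simp: bin_iff)
  qed
  have inj: "inj_on (\<lambda>(x,y). x@y) ({v\<in>binwords a. Q v} \<times> binwords b)"
  proof (rule inj_onI)
    fix p q assume "p \<in> {v\<in>binwords a. Q v} \<times> binwords b" "q \<in> {v\<in>binwords a. Q v} \<times> binwords b" "(\<lambda>(x,y). x@y) p = (\<lambda>(x,y). x@y) q"
    then show "p = q" by (cases p; cases q) (simp add: bin_iff)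
  qed
  show ?thesis
    unfolding eq card_image[OF inj] card_cartesian_product card_bin by simp
qed


definition ones :: "nat list \<Rightarrow> nat" where
  "ones v = length (filter (\<lambda>x. x = 1) v)"

lemma bin_Suc: "binwords (Suc m) = Cons 0 ` binwords m \<union> Cons 1 ` binwords m"
proof (rule set_eqI, rule iffI)
  fix u assume "u \<in> binwords (Suc m)"
  then obtain x xs where u: "u = x#xs" "x \<in> {0,1}" "xs \<in> binwords m"
    by (cases u) (auto simp: bin_iff)
  then show "u \<in> Cons 0 ` binwords m \<union> Cons 1 ` binwords m" by auto
qed (auto simp: bin_iff)

lemma sum_bin_Suc:
  "(\<Sum>v\<in>binwords (Suc m). f v) = (\<Sum>v\<in>binwords m. f (0#v)) + (\<Sum>v\<in>binwords m. f (1#v))"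
proof -
  have "(\<Sum>v\<in>binwords (Suc m). f v) = (\<Sum>v\<in>Cons 0 ` binwords m. f v) + (\<Sum>v\<in>Cons 1 ` binwords m. f v)"
    unfolding bin_Suc by (rule sum.union_disjoint) (auto simp: finite_bin)
  also have "\<dots> = (\<Sum>v\<in>binwords m. f (0#v)) + (\<Sum>v\<in>binwords m. f (1#v))"
    by (simp add: sum.reindex)
  finally show ?thesis .
qed

definition dev :: "nat list \<Rightarrow> real" where
  "dev v = real (ones v) - real (length v) / 2"

lemma dev_Cons0: "dev (0#v) = dev v - 1/2" by (simp add: dev_def ones_def field_simps)
lemma dev_Cons1: "dev (1#v) = dev v + 1/2" by (simp add: dev_def ones_def field_simps)
lemma dev_Cons1': "dev (Suc 0#v) = dev v + 1/2" by (simp add: dev_def ones_def field_simps)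

lemma sum_dev2: "(\<Sum>v\<in>binwords m. (dev v)^2) = real m * 2^m / 4"
proof (induction m)
  case 0
  have "binwords 0 = {[]}" by (auto simp: bin_iff)
  then show ?case by (simp add: dev_def ones_def)
next
  case (Suc m)
  have "(\<Sum>v\<in>binwords (Suc m). (dev v)^2) = (\<Sum>v\<in>binwords m. (dev v - 1/2)^2 + (dev v + 1/2)^2)"
    by (simp add: sum_bin_Suc dev_Cons0 dev_Cons1 dev_Cons1' sum.distrib)
  also have "\<dots> = (\<Sum>v\<in>binwords m. 2 * (dev v)^2 + 1/2)"
    by (rule sum.cong) (auto simp: power2_eq_square algebra_simps)
  also have "\<dots> = 2 * (\<Sum>v\<in>binwords m. (dev v)^2) + real (card (binwords m)) / 2"
    by (simp add: sum.distrib sum_distrib_left)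
  also have "\<dots> = real (Suc m) * 2^Suc m / 4"
    using Suc.IH by (simp add: card_bin algebra_simps)
  finally show ?case .
qed

lemma cheb:
  assumes "0 < m" "0 < (e::real)"
  shows "real (card {v\<in>binwords m. real (ones v) / real m \<notin> {1/2 - e .. 1/2 + e}}) \<le> 2^m / (4 * e^2 * real m)"
proof -
  let ?B = "{v\<in>binwords m. real (ones v) / real m \<notin> {1/2 - e .. 1/2 + e}}"
  have mpos: "real m > 0" using assms by simp
  have key: "(e * real m)^2 \<le> (dev v)^2" if "v \<in> ?B" for v
  proof -
    have len: "length v = m" using that by (simp add: bin_iff)
    have "real (ones v) / real m < 1/2 - e \<or> real (ones v) / real m > 1/2 + e" using that by auto
    then have "real (ones v) < (1/2 - e) * real m \<or> real (ones v) > (1/2 + e) * real m"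
      using mpos by (auto simp: divide_less_eq less_divide_eq)
    then have "e * real m \<le> \<bar>dev v\<bar>" using len by (auto simp: dev_def algebra_simps)
    then show ?thesis using assms mpos
      by (metis abs_ge_zero mult_pos_pos order_less_imp_le power2_abs power_mono)
  qed
  have "real (card ?B) * (e * real m)^2 = (\<Sum>v\<in>?B. (e * real m)^2)" by simp
  also have "\<dots> \<le> (\<Sum>v\<in>?B. (dev v)^2)" by (rule sum_mono) (rule key)
  also have "\<dots> \<le> (\<Sum>v\<in>binwords m. (dev v)^2)"
    by (rule sum_mono2) (auto simp: finite_bin)
  also have "\<dots> = real m * 2^m / 4" by (rule sum_dev2)
  finally have *: "real (card ?B) * (e * real m)^2 \<le> real m * 2^m / 4" .
  have pos: "(e * real m)^2 > 0" using assms mpos by simp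
  have "real (card ?B) \<le> (real m * 2^m / 4) / (e * real m)^2"
    using * pos by (simp add: le_divide_eq)
  also have "\<dots> = 2^m / (4 * e^2 * real m)"
    using mpos by (simp add: power2_eq_square field_simps)
  finally show ?thesis .
qed

lemma pg_drop: "k \<le> length u \<Longrightarrow> pg (drop k u) j i = pg u j (k+i)"
proof (induction j arbitrary: i)
  case 0 then show ?case by simp
next
  case (Suc j) then show ?case by (simp only: pg_Suc' add_Suc_right)
qed

lemma pg_take: "i + j < m \<Longrightarrow> pg (take m u) j i = pg u j i"
proof (induction j arbitrary: i)
  case 0 then show ?case by simp
next
  case (Suc j)
  have "pg (take m u) (Suc j) i = adiff (pg (take m u) j i) (pg (take m u) j (Suc i))" by (rule pg_Suc')
  also have "\<dots> = adiff (pg u j i) (pg u j (Suc i))" using Suc by simp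
  also have "\<dots> = pg u (Suc j) i" by (rule pg_Suc'[symmetric])
  finally show ?case .
qed

lemma pg_rev: "i + j < length w \<Longrightarrow> pg (rev w) j i = pg w j (length w - 1 - j - i)"
proof (induction j arbitrary: i)
  case 0 then show ?case by (simp add: rev_nth)
next
  case (Suc j)
  define p where "p = length w - 1 - Suc j - i"
  have p1: "Suc p = length w - 1 - j - i" and p2: "length w - 1 - j - Suc i = p"
    using Suc.prems by (simp_all add: p_def)
  have "pg (rev w) (Suc j) i = adiff (pg (rev w) j i) (pg (rev w) j (Suc i))" by (rule pg_Suc')
  also have "\<dots> = adiff (pg w j (Suc p)) (pg w j p)" using Suc p1 p2 by simp
  also have "\<dots> = pg w (Suc j) p" by (simp add: pg_Suc' adiff_comm del: pg.simps)
  finally show ?case by (simp add: p_def)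
qed

lemma length_west0[simp]: "length (west0 v) = length v" by (simp add: west0_def)
lemma nth_west0: "j < length v \<Longrightarrow> west0 v ! j = pg v j 0" by (simp add: west0_def)

lemma ones_west0: "ones (west0 v) = card {j. j < length v \<and> pg v j 0 = 1}"
proof -
  have "{i. i < length (west0 v) \<and> west0 v ! i = 1} = {j. j < length v \<and> pg v j 0 = 1}"
    by (auto simp: nth_west0)
  then show ?thesis by (simp only: ones_def length_filter_conv_card)
qed

lemma R_west_eq:
  assumes "length u = N" "k < N"
  shows "R_west u k = real (ones (west0 (drop k u))) / real (N - k)"
proof -
  have "{j. j \<le> N - 1 - k \<and> pg u j k = 1} = {j. j < length (drop k u) \<and> pg (drop k u) j 0 = 1}"
    using assms by (auto simp: pg_drop)
  then show ?thesis using assms by (simp add: R_west_def ones_west0)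
qed

lemma R_east_eq:
  assumes "length u = N" "k < N"
  shows "R_east u k = real (ones (west0 (rev (take (N - k) u)))) / real (N - k)"
proof -
  have "{j. j \<le> N - 1 - k \<and> pg u j (N - 1 - k - j) = 1}
      = {j. j < length (rev (take (N - k) u)) \<and> pg (rev (take (N - k) u)) j 0 = 1}"
  proof (rule set_eqI)
    fix j
    show "j \<in> {j. j \<le> N - 1 - k \<and> pg u j (N - 1 - k - j) = 1} \<longleftrightarrow>
      j \<in> {j. j < length (rev (take (N - k) u)) \<and> pg (rev (take (N - k) u)) j 0 = 1}"
    proof (cases "j < N - k")
      case True
      have "pg (rev (take (N - k) u)) j 0 = pg (take (N - k) u) j (N - k - 1 - j - 0)"
        using True assms by (subst pg_rev) auto
      also have "\<dots> = pg u j (N - 1 - k - j)"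
        using True by (subst pg_take) (auto simp: algebra_simps)
      finally show ?thesis using True assms by auto
    next
      case False then show ?thesis using assms by auto
    qed
  qed
  then show ?thesis using assms by (simp add: R_east_def ones_west0)
qed


lemma bad_k:
  assumes "k < N" "0 < e"
  shows "real (card {u\<in>binwords N. R_west u k \<notin> {1/2-e..1/2+e} \<or> R_east u k \<notin> {1/2-e..1/2+e}})
     \<le> 2^N / (2*e^2*real (N-k))"
proof -
  define m where "m = N - k"
  have m0: "0 < m" and Nkm: "N = k + m" and Nmk: "N = m + k" using assms by (auto simp: m_def)
  define P where "P v \<longleftrightarrow> real (ones v) / real m \<notin> {1/2-e..1/2+e}" for v
  define W where "W = {u\<in>binwords N. P (west0 (drop k u))}"
  define Ea where "Ea = {u\<in>binwords N. P (west0 (rev (take m u)))}"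
  have seteq: "{u\<in>binwords N. R_west u k \<notin> {1/2-e..1/2+e} \<or> R_east u k \<notin> {1/2-e..1/2+e}} = W \<union> Ea"
  proof -
    have rw: "R_west u k \<notin> {1/2-e..1/2+e} \<longleftrightarrow> P (west0 (drop k u))" if "u \<in> binwords N" for u
    proof -
      have "length u = N" using that by (simp add: bin_iff)
      then have "R_west u k = real (ones (west0 (drop k u))) / real m"
        unfolding m_def using assms(1) by (rule R_west_eq)
      then show ?thesis by (simp only: P_def)
    qed
    have re: "R_east u k \<notin> {1/2-e..1/2+e} \<longleftrightarrow> P (west0 (rev (take m u)))" if "u \<in> binwords N" for u
    proof -
      have "length u = N" using that by (simp add: bin_iff)
      then have "R_east u k = real (ones (west0 (rev (take m u)))) / real m"
        unfolding m_def using assms(1) by (rule R_east_eq)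
      then show ?thesis by (simp only: P_def)
    qed
    show ?thesis
    proof (rule set_eqI)
      fix u
      show "u \<in> {u\<in>binwords N. R_west u k \<notin> {1/2-e..1/2+e} \<or> R_east u k \<notin> {1/2-e..1/2+e}} \<longleftrightarrow> u \<in> W \<union> Ea"
      proof (cases "u \<in> binwords N")
        case True then show ?thesis unfolding W_def Ea_def mem_Collect_eq Un_iff rw[OF True] re[OF True] by simp
      next
        case False then show ?thesis unfolding W_def Ea_def by simp
      qed
    qed
  qed
  define c where "c = card {v\<in>binwords m. P v}"
  have cW: "card W = 2^k * c"
  proof -
    have "card W = 2^k * card {v\<in>binwords m. P (west0 v)}"
      unfolding W_def Nkm by (rule card_drop)
    also have "card {v\<in>binwords m. P (west0 v)} = c"
      unfolding c_def by (rule card_pre[OF west0_inj west0_img])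
    finally show ?thesis .
  qed
  have cE: "card Ea = 2^k * c"
  proof -
    have "card Ea = 2^k * card {w\<in>binwords m. P (west0 (rev w))}"
      unfolding Ea_def Nmk by (rule card_take)
    also have "card {w\<in>binwords m. P (west0 (rev w))} = card {v\<in>binwords m. P (west0 v)}"
      by (rule card_pre[OF _ rev_img]) (simp add: inj_on_def)
    also have "\<dots> = c"
      unfolding c_def by (rule card_pre[OF west0_inj west0_img])
    finally show ?thesis .
  qed
  have cc: "real c \<le> 2^m / (4 * e^2 * real m)"
    unfolding c_def P_def using cheb[OF m0 assms(2)] .
  have "real (card (W \<union> Ea)) \<le> real (card W) + real (card Ea)"
    using card_Un_le[of W Ea] by linarith
  also have "\<dots> = 2 * 2^k * real c" using cW cE by simp
  also have "\<dots> \<le> 2 * 2^k * (2^m / (4 * e^2 * real m))"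
    using cc by (intro mult_left_mono) auto
  also have "\<dots> = 2^N / (2*e^2*real (N-k))"
  proof -
    have "(2::real)^N = 2^k * 2^m" unfolding Nkm by (simp add: power_add)
    moreover have "real (N-k) = real m" by (simp add: m_def)
    ultimately show ?thesis using m0 assms(2) by (simp add: field_simps)
  qed
  finally show ?thesis using seteq by simp
qed


theorem theorem2p5:
  fixes \<epsilon> :: real
  assumes "0 < \<epsilon>" and "\<epsilon> < 1/2"
  shows "\<exists>\<delta>::real. \<delta> > 0 \<and> (\<exists>N0::nat. \<forall>N\<ge>N0. \<exists>E. E \<subseteq> binwords N \<and>
            real (card E) \<le> \<epsilon> * 2 ^ N \<and>
            (\<forall>u \<in> binwords N - E. \<forall>k::nat. k < N \<and> real k \<le> of_int \<lfloor>\<delta> * real N\<rfloor> \<longrightarrow>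
               R_west u k \<in> {1/2 - \<epsilon> .. 1/2 + \<epsilon>} \<and>
               R_east u k \<in> {1/2 - \<epsilon> .. 1/2 + \<epsilon>}))"
proof -
  define d where "d = \<epsilon>^3/2"
  define N0 where "N0 = nat \<lceil>2/\<epsilon>^3\<rceil> + 1"
  have e3: "\<epsilon>^3 > 0" using assms by simp
  have dpos: "d > 0" using e3 by (simp add: d_def)
  have "\<epsilon>^3 \<le> \<epsilon>" using assms by (simp add: power_le_one_iff power3_eq_cube mult_le_one) 
  then have dle: "d \<le> 1/2" using assms by (simp add: d_def)
  have main: "\<exists>E. E \<subseteq> binwords N \<and>
            real (card E) \<le> \<epsilon> * 2 ^ N \<and>
            (\<forall>u \<in> binwords N - E. \<forall>k::nat. k < N \<and> real k \<le> of_int \<lfloor>d * real N\<rfloor> \<longrightarrow>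
               R_west u k \<in> {1/2 - \<epsilon> .. 1/2 + \<epsilon>} \<and>
               R_east u k \<in> {1/2 - \<epsilon> .. 1/2 + \<epsilon>})" if NN0: "N \<ge> N0" for N
  proof -
    define K where "K = {k. k < N \<and> real k \<le> of_int \<lfloor>d * real N\<rfloor>}"
    define B where "B k = {u\<in>binwords N. R_west u k \<notin> {1/2-\<epsilon>..1/2+\<epsilon>} \<or> R_east u k \<notin> {1/2-\<epsilon>..1/2+\<epsilon>}}" for k
    define E where "E = (\<Union>k\<in>K. B k)"
    have Npos: "real N > 0" using NN0 by (simp add: N0_def)
    have NN: "\<epsilon>^3 * real N \<ge> 2"
    proof -
      have "2/\<epsilon>^3 \<le> real N" using NN0 unfolding N0_def by linarith
      then show ?thesis using e3 by (simp add: divide_le_eq mult.commute)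
    qed
    have finK: "finite K" by (simp add: K_def)
    have dN: "0 \<le> d * real N" using dpos Npos by simp
    have Ksub: "K \<subseteq> {..nat \<lfloor>d * real N\<rfloor>}"
    proof
      fix k assume "k \<in> K"
      then have "real k \<le> of_int \<lfloor>d * real N\<rfloor>" by (simp add: K_def)
      then show "k \<in> {..nat \<lfloor>d * real N\<rfloor>}" by (simp add: le_nat_iff)
    qed
    have cK: "real (card K) \<le> d * real N + 1"
    proof -
      have "card K \<le> Suc (nat \<lfloor>d * real N\<rfloor>)" using card_mono[OF _ Ksub] by simp
      moreover have "real (nat \<lfloor>d * real N\<rfloor>) \<le> d * real N" using dN by linarith
      ultimately show ?thesis by linarith
    qed
    have trm: "real (card (B k)) \<le> 2^N / (\<epsilon>^2 * real N)" if "k \<in> K" for k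
    proof -
      have k: "k < N" "real k \<le> d * real N" using that by (auto simp: K_def) linarith
      have "d * real N \<le> 1/2 * real N" by (rule mult_right_mono[OF dle]) simp
      then have "real k \<le> real N / 2" using k(2) by linarith
      then have le: "\<epsilon>^2 * real N \<le> 2*\<epsilon>^2*real (N-k)" using k(1) assms(1)
        by (simp add: of_nat_diff)
      have "real (card (B k)) \<le> 2^N / (2*\<epsilon>^2*real (N-k))"
        unfolding B_def by (rule bad_k[OF k(1) assms(1)])
      also have "\<dots> \<le> 2^N / (\<epsilon>^2 * real N)"
        using le assms(1) Npos by (intro divide_left_mono) auto
      finally show ?thesis .
    qed
    have "real (card E) \<le> (\<Sum>k\<in>K. real (card (B k)))"
      unfolding E_def using card_UN_le[OF finK, of B] by (simp flip: of_nat_sum)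
    also have "\<dots> \<le> (\<Sum>k\<in>K. 2^N / (\<epsilon>^2 * real N))" by (rule sum_mono) (rule trm)
    also have "\<dots> = real (card K) * (2^N / (\<epsilon>^2 * real N))" by simp
    also have "\<dots> \<le> (d * real N + 1) * (2^N / (\<epsilon>^2 * real N))"
      using cK by (intro mult_right_mono) auto
    also have "\<dots> \<le> \<epsilon> * 2^N"
    proof -
      have "d * real N + 1 \<le> \<epsilon>^3 * real N" using NN by (simp add: d_def)
      then have "(d * real N + 1) / (\<epsilon>^2 * real N) \<le> \<epsilon>^3 * real N / (\<epsilon>^2 * real N)"
        using assms(1) Npos by (intro divide_right_mono) auto
      also have "\<dots> = \<epsilon>" using assms(1) Npos by (simp add: power2_eq_square power3_eq_cube)
      finally have "(d * real N + 1) / (\<epsilon>^2 * real N) \<le> \<epsilon>" .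
      then have "(d * real N + 1) / (\<epsilon>^2 * real N) * 2^N \<le> \<epsilon> * 2^N" by (intro mult_right_mono) auto
      then show ?thesis by simp
    qed
    finally have cE: "real (card E) \<le> \<epsilon> * 2^N" .
    have sub: "E \<subseteq> binwords N" unfolding E_def B_def by auto
    have good: "\<forall>u \<in> binwords N - E. \<forall>k::nat. k < N \<and> real k \<le> of_int \<lfloor>d * real N\<rfloor> \<longrightarrow>
               R_west u k \<in> {1/2 - \<epsilon> .. 1/2 + \<epsilon>} \<and>
               R_east u k \<in> {1/2 - \<epsilon> .. 1/2 + \<epsilon>}"
    proof (intro ballI allI impI)
      fix u k assume u: "u \<in> binwords N - E" and k: "k < N \<and> real k \<le> of_int \<lfloor>d * real N\<rfloor>"
      then have "k \<in> K" by (simp add: K_def)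
      then have "u \<notin> B k" using u by (auto simp: E_def)
      then show "R_west u k \<in> {1/2 - \<epsilon> .. 1/2 + \<epsilon>} \<and> R_east u k \<in> {1/2 - \<epsilon> .. 1/2 + \<epsilon>}"
        using u unfolding B_def by blast
    qed
    show ?thesis using sub cE good by blast
  qed
  show ?thesis using dpos main by blast
qed

end
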